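(* For every torus of tensor product $y=\gamma\otimes\hat\gamma$ one has $W(y)>2\pi^2$.
   Context: Let $\gamma:\mathbb{R}\to S^n\subset\mathbb{R}^{n+1}$ and $\hat\gamma:\mathbb{R}\to S^m\subset\mathbb{R}^{m+1}$ be smooth closed curves parametrized by arc length with periods equal to their lengths. For $x\in\mathbb{R}^{n+1}$, $\hat x\in\mathbb{R}^{m+1}$ the tensor product is $x\otimes\hat x=(x_i\hat x_j)_{i,j}\in\mathbb{R}^{(n+1)(m+1)}$ (lexicographic order). The torus of tensor product is $y=\gamma\otimes\hat\gamma:(s,\hat s)\mapsto\gamma(s)\otimes\hat\gamma(\hat s)\in S^{(n+1)(m+1)-1}$. For a closed immersed surface $x:M\to S^N$ with mean curvature vector $\vec H$ and Gauss curvature $K$, the Willmore functional is $W(x)=\int_M(|\vec H|^2-K+1)\,dM$. *)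

theory Defs
  imports "HOL-Analysis.Analysis"
begin

definition smooth_curve :: "(real \<Rightarrow> 'a::real_normed_vector) \<Rightarrow> bool" where
  "smooth_curve c \<longleftrightarrow> (\<exists>D. D 0 = c \<and> (\<forall>k t. (D k has_vector_derivative D (Suc k) t) (at t)))"

definition closed_unit_speed_sphere_curve :: "(real \<Rightarrow> real^'n) \<Rightarrow> real \<Rightarrow> bool" where
  "closed_unit_speed_sphere_curve c L \<longleftrightarrow>
     smooth_curve c \<and> 0 < L \<and> (\<forall>s. c (s + L) = c s) \<and>
     (\<forall>s. norm (c s) = 1) \<and> (\<forall>s. norm (vector_derivative c (at s)) = 1)"

definition tensor :: "real^'n \<Rightarrow> real^'m \<Rightarrow> real^('n \<times> 'm)" where
  "tensor x z = (\<chi> ij. x $ fst ij * z $ snd ij)"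

definition tensor_torus :: "(real \<Rightarrow> real^'n) \<Rightarrow> (real \<Rightarrow> real^'m) \<Rightarrow> real \<times> real \<Rightarrow> real^('n \<times> 'm)" where
  "tensor_torus c d = (\<lambda>(s, t). tensor (c s) (d t))"

definition pd1 :: "(real \<times> real \<Rightarrow> 'a::real_normed_vector) \<Rightarrow> real \<times> real \<Rightarrow> 'a" where
  "pd1 x = (\<lambda>(s, t). vector_derivative (\<lambda>u. x (u, t)) (at s))"

definition pd2 :: "(real \<times> real \<Rightarrow> 'a::real_normed_vector) \<Rightarrow> real \<times> real \<Rightarrow> 'a" where
  "pd2 x = (\<lambda>(s, t). vector_derivative (\<lambda>v. x (s, v)) (at t))"

definition fE :: "(real \<times> real \<Rightarrow> real^'k) \<Rightarrow> real \<times> real \<Rightarrow> real" where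
  "fE x p = pd1 x p \<bullet> pd1 x p"
definition fF :: "(real \<times> real \<Rightarrow> real^'k) \<Rightarrow> real \<times> real \<Rightarrow> real" where
  "fF x p = pd1 x p \<bullet> pd2 x p"
definition fG :: "(real \<times> real \<Rightarrow> real^'k) \<Rightarrow> real \<times> real \<Rightarrow> real" where
  "fG x p = pd2 x p \<bullet> pd2 x p"
definition gdet :: "(real \<times> real \<Rightarrow> real^'k) \<Rightarrow> real \<times> real \<Rightarrow> real" where
  "gdet x p = fE x p * fG x p - (fF x p)\<^sup>2"

text \<open>Orthogonal projection onto the tangent plane span(x_s, x_t), and the normal
  components in the Euclidean space R^k and in the unit sphere S^(k-1).\<close>
definition tan_part :: "(real \<times> real \<Rightarrow> real^'k) \<Rightarrow> real \<times> real \<Rightarrow> real^'k \<Rightarrow> real^'k" where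
  "tan_part x p v =
     (1 / gdet x p) *\<^sub>R
       ((fG x p * (v \<bullet> pd1 x p) - fF x p * (v \<bullet> pd2 x p)) *\<^sub>R pd1 x p +
        (fE x p * (v \<bullet> pd2 x p) - fF x p * (v \<bullet> pd1 x p)) *\<^sub>R pd2 x p)"

definition eucl_normal :: "(real \<times> real \<Rightarrow> real^'k) \<Rightarrow> real \<times> real \<Rightarrow> real^'k \<Rightarrow> real^'k" where
  "eucl_normal x p v = v - tan_part x p v"

text \<open>For x with values in the unit sphere, the normal space of the surface inside the
  sphere is the orthogonal complement of span(x_s, x_t, x).\<close>
definition sphere_normal :: "(real \<times> real \<Rightarrow> real^'k) \<Rightarrow> real \<times> real \<Rightarrow> real^'k \<Rightarrow> real^'k" where
  "sphere_normal x p v = eucl_normal x p v - (v \<bullet> x p) *\<^sub>R x p"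

definition x11 where "x11 x = pd1 (pd1 x)"
definition x12 where "x12 x = pd2 (pd1 x)"
definition x22 where "x22 x = pd2 (pd2 x)"

text \<open>Mean curvature vector of x in the sphere: H = (1/2) g^{ij} B_ij.\<close>
definition mean_curv_vec :: "(real \<times> real \<Rightarrow> real^'k) \<Rightarrow> real \<times> real \<Rightarrow> real^'k" where
  "mean_curv_vec x p =
     (1 / (2 * gdet x p)) *\<^sub>R
       (fG x p *\<^sub>R sphere_normal x p (x11 x p) - (2 * fF x p) *\<^sub>R sphere_normal x p (x12 x p)
        + fE x p *\<^sub>R sphere_normal x p (x22 x p))"

text \<open>Gauss curvature of the induced metric, computed (Theorema Egregium / Gauss equation)
  from the second fundamental form in the Euclidean space R^k.\<close>
definition gauss_curv :: "(real \<times> real \<Rightarrow> real^'k) \<Rightarrow> real \<times> real \<Rightarrow> real" where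
  "gauss_curv x p =
     (eucl_normal x p (x11 x p) \<bullet> eucl_normal x p (x22 x p)
      - eucl_normal x p (x12 x p) \<bullet> eucl_normal x p (x12 x p)) / gdet x p"

text \<open>Willmore functional of the doubly periodic surface x, periods a and b, i.e. of the
  immersed torus R^2/(aZ x bZ) -> S^(k-1):  W = int (|H|^2 - K + 1) dM.\<close>
definition willmore :: "(real \<times> real \<Rightarrow> real^'k) \<Rightarrow> real \<Rightarrow> real \<Rightarrow> real" where
  "willmore x a b =
     integral (cbox (0, 0) (a, b))
       (\<lambda>p. ((norm (mean_curv_vec x p))\<^sup>2 - gauss_curv x p + 1) * sqrt (gdet x p))"

end

theory Submission
  imports Defs
begin

lemma riccati_identity:
  fixes c s t k G G' :: real
  assumes "c \<noteq> 0" "t = s / c" "c^2 + s^2 = 1"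
  shows "G'^2 - ((- k * (k * inverse (c^2))) * G^2 + (- k * t) * (2 * G * G')) - k^2 * G^2
         = (G' - (- k * t) * G)^2"
proof -
  have "inverse (c^2) = 1 + t^2"
  proof -
    have "1 + t^2 = (c^2 + s^2) / c^2" using assms(1,2) by (simp add: power_divide add_divide_distrib)
    thus ?thesis using assms(3) by (simp add: inverse_eq_divide)
  qed
  note e = this
  show ?thesis unfolding e by (simp add: power2_eq_square algebra_simps)
qed

lemma dirichlet_k:
  fixes g g' :: "real \<Rightarrow> real"
  assumes der: "\<And>x. (g has_real_derivative g' x) (at x)" and cg': "continuous_on UNIV g'"
    and P: "P > 0" and ga: "g a = 0" and gb: "g (a+P) = 0"
    and k: "0 < k" "k < pi/P"
  shows "k^2 * integral {a..a+P} (\<lambda>x. (g x)^2) \<le> integral {a..a+P} (\<lambda>x. (g' x)^2)"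
proof -
  define c where "c x = cos (k*(x-a-P/2))" for x
  define w where "w x = - k * tan (k*(x-a-P/2))" for x
  define h' where "h' x = (- k * (k * inverse ((c x)^2))) * (g x)^2 + w x * (2 * g x * g' x)" for x
  have cpos: "c x > 0" if "x \<in> {a..a+P}" for x
  proof -
    have "k * P < pi" using k P by (simp add: pos_less_divide_eq)
    moreover have "\<bar>x-a-P/2\<bar> \<le> P/2" using that unfolding atLeastAtMost_iff by arith
    hence "\<bar>k*(x-a-P/2)\<bar> \<le> k*(P/2)" using k by (simp add: abs_mult)
    ultimately have "\<bar>k*(x-a-P/2)\<bar> < pi/2" by linarith
    thus ?thesis unfolding c_def by (intro cos_gt_zero_pi) auto
  qed
  have hder: "((\<lambda>x. w x * (g x)^2) has_real_derivative h' x) (at x)" if "x \<in> {a..a+P}" for x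
  proof -
    have "cos (k*(x-a-P/2)) \<noteq> 0" using cpos[OF that] unfolding c_def by simp
    with der[of x] show ?thesis unfolding h'_def w_def c_def
      by (auto intro!: derivative_eq_intros)
  qed
  have gcont: "continuous_on UNIV g"
    using der by (meson DERIV_isCont continuous_at_imp_continuous_on)
  have I3: "(h' has_integral (w (a+P) * (g (a+P))^2 - w a * (g a)^2)) {a..a+P}"
    apply (rule fundamental_theorem_of_calculus)
    using P apply simp
    using hder by (simp add: has_real_derivative_iff_has_vector_derivative[symmetric] has_field_derivative_at_within)
  hence I3': "(h' has_integral 0) {a..a+P}" using ga gb by simp
  have int1: "(\<lambda>x. (g' x)^2) integrable_on {a..a+P}"
    by (intro integrable_continuous_interval continuous_intros continuous_on_subset[OF cg']) auto
  have int2: "(\<lambda>x. (g x)^2) integrable_on {a..a+P}"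
    by (intro integrable_continuous_interval continuous_intros continuous_on_subset[OF gcont]) auto
  have "((\<lambda>x. (g' x)^2 - h' x - k^2 * (g x)^2) has_integral
      (integral {a..a+P} (\<lambda>x. (g' x)^2) - 0 - k^2 * integral {a..a+P} (\<lambda>x. (g x)^2))) {a..a+P}"
    by (intro has_integral_diff I3' has_integral_mult_right integrable_integral int1 int2)
  moreover have "0 \<le> (g' x)^2 - h' x - k^2 * (g x)^2" if "x \<in> {a..a+P}" for x
  proof -
    have cx: "c x \<noteq> 0" using cpos[OF that] by simp
    have "tan (k*(x-a-P/2)) = sin (k*(x-a-P/2)) / c x" unfolding c_def tan_def by simp
    moreover have "(c x)^2 + (sin (k*(x-a-P/2)))^2 = 1" unfolding c_def by (simp add: add.commute)
    ultimately have "(g' x)^2 - h' x - k^2 * (g x)^2 = (g' x - w x * g x)^2"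
      unfolding h'_def w_def using riccati_identity[OF cx, where t="tan (k*(x-a-P/2))" and s="sin (k*(x-a-P/2))" and k=k and G'="g' x" and G="g x"] by simp
    thus ?thesis by simp
  qed
  ultimately have "0 \<le> integral {a..a+P} (\<lambda>x. (g' x)^2) - 0 - k^2 * integral {a..a+P} (\<lambda>x. (g x)^2)"
    by (rule has_integral_nonneg)
  thus ?thesis by simp
qed

lemma int_sq_nonneg:
  fixes g :: "real \<Rightarrow> real"
  assumes "continuous_on UNIV g"
  shows "0 \<le> integral {a..b} (\<lambda>x. (g x)^2)"
  by (rule integral_nonneg) (auto intro!: integrable_continuous_interval continuous_intros continuous_on_subset[OF assms])

lemma dirichlet:
  fixes g g' :: "real \<Rightarrow> real"
  assumes der: "\<And>x. (g has_real_derivative g' x) (at x)" and cg': "continuous_on UNIV g'"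
    and P: "P > 0" and ga: "g a = 0" and gb: "g (a+P) = 0"
  shows "(pi/P)^2 * integral {a..a+P} (\<lambda>x. (g x)^2) \<le> integral {a..a+P} (\<lambda>x. (g' x)^2)"
proof -
  have gcont: "continuous_on UNIV g"
    using der by (meson DERIV_isCont continuous_at_imp_continuous_on)
  define I where "I = integral {a..a+P} (\<lambda>x. (g x)^2)"
  define J where "J = integral {a..a+P} (\<lambda>x. (g' x)^2)"
  have I0: "0 \<le> I" unfolding I_def by (rule int_sq_nonneg[OF gcont])
  have J0: "0 \<le> J" unfolding J_def by (rule int_sq_nonneg[OF cg'])
  show ?thesis
  proof (cases "I = 0")
    case True thus ?thesis using J0 unfolding I_def[symmetric] J_def[symmetric] by simp
  next
    case False
    hence Ip: "I > 0" using I0 by simp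
    have "(pi/P)^2 * I \<le> J"
    proof (rule dense_le_bounded[of 0])
      show "0 < (pi/P)^2 * I" using Ip P by simp
    next
      fix w assume w: "0 < w" "w < (pi/P)^2 * I"
      define k where "k = sqrt (w / I)"
      have kp: "0 < k" unfolding k_def using w Ip by simp
      have "w / I < (pi/P)^2" using w Ip by (simp add: divide_less_eq)
      hence "k < sqrt ((pi/P)^2)" unfolding k_def by (rule real_sqrt_less_mono)
      hence kl: "k < pi/P" using P by simp
      have "k^2 = w / I" unfolding k_def using w Ip by simp
      hence "k^2 * I = w" using Ip by simp
      thus "w \<le> J" using dirichlet_k[OF der cg' P ga gb kp kl] unfolding I_def[symmetric] J_def[symmetric] by simp
    qed
    thus ?thesis unfolding I_def J_def .
  qed
qed

lemma cont_shift:
  fixes h :: "real \<Rightarrow> real"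
  assumes "continuous_on UNIV h"
  shows "continuous_on UNIV (\<lambda>x. h (x + c))"
  by (rule continuous_on_compose2[OF assms]) (auto intro!: continuous_intros)

lemma cont_int:
  fixes h :: "real \<Rightarrow> real"
  assumes "continuous_on UNIV h"
  shows "h integrable_on {a..b}"
  by (rule integrable_continuous_interval, rule continuous_on_subset[OF assms]) auto

lemma int_shift:
  fixes h :: "real \<Rightarrow> real"
  shows "integral {P..P+b} h = integral {0..b} (\<lambda>x. h (x + P))"
  using integral_shift_Icc_real[of 0 b h P] by (simp add: comp_def add.commute)

lemma int_per_shift:
  fixes h :: "real \<Rightarrow> real"
  assumes c: "continuous_on UNIV h" and per: "\<And>x. h (x + P) = h x" and b: "0 \<le> b" "b \<le> P"
  shows "integral {b..b+P} h = integral {0..P} h"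
proof -
  have e1: "integral {b..P} h + integral {P..b+P} h = integral {b..b+P} h"
    by (rule Henstock_Kurzweil_Integration.integral_combine) (use b cont_int[OF c] in auto)
  have e2: "integral {0..b} h + integral {b..P} h = integral {0..P} h"
    by (rule Henstock_Kurzweil_Integration.integral_combine) (use b cont_int[OF c] in auto)
  have e3: "integral {P..P+b} h = integral {0..b} h" using int_shift[of P b h] per by simp
  have e3': "integral {P..b+P} h = integral {0..b} h" using e3 by (metis add.commute)
  show ?thesis using e1 e2 e3' by linarith
qed

lemma int_split:
  fixes h :: "real \<Rightarrow> real"
  assumes c: "continuous_on UNIV h" and P: "0 \<le> P"
  shows "integral {0..2*P} h = integral {0..P} (\<lambda>x. h x + h (x + P))"
proof -
  have e1: "integral {0..P} h + integral {P..P+P} h = integral {0..P+P} h"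
    by (rule Henstock_Kurzweil_Integration.integral_combine) (use P cont_int[OF c] in auto)
  have e2: "integral {P..P+P} h = integral {0..P} (\<lambda>x. h (x + P))" by (rule int_shift)
  have e3: "integral {0..P} h + integral {0..P} (\<lambda>x. h (x + P)) = integral {0..P} (\<lambda>x. h x + h (x + P))"
    by (rule integral_add[symmetric]) (auto intro!: cont_int c cont_shift)
  have "2 * P = P + P" by simp
  thus ?thesis using e1 e2 e3 by simp
qed

lemma zero_exists:
  fixes e :: "real \<Rightarrow> real"
  assumes c: "continuous_on UNIV e" and ab: "a < b" and i: "integral {a..b} e = 0"
  shows "\<exists>x\<in>{a..b}. e x = 0"
proof -
  have ce: "continuous_on {a..b} e" using c by (rule continuous_on_subset) auto
  obtain xm where xm: "xm \<in> {a..b}" "\<And>y. y \<in> {a..b} \<Longrightarrow> e xm \<le> e y"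
    using continuous_attains_inf[OF compact_Icc _ ce] ab by auto
  obtain xM where xM: "xM \<in> {a..b}" "\<And>y. y \<in> {a..b} \<Longrightarrow> e y \<le> e xM"
    using continuous_attains_sup[OF compact_Icc _ ce] ab by auto
  have "integral {a..b} (\<lambda>x. e xm) \<le> integral {a..b} e"
    by (rule integral_le) (auto intro: xm cont_int[OF c])
  hence "(b - a) * e xm \<le> 0" using ab i by simp
  hence m: "e xm \<le> 0" using ab by (simp add: mult_le_0_iff)
  have "integral {a..b} e \<le> integral {a..b} (\<lambda>x. e xM)"
    by (rule integral_le) (auto intro: xM cont_int[OF c])
  hence "0 \<le> (b - a) * e xM" using ab i by simp
  hence M: "0 \<le> e xM" using ab by (simp add: zero_le_mult_iff)
  show ?thesis
  proof (cases "xm \<le> xM")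
    case True
    obtain x where "xm \<le> x" "x \<le> xM" "e x = 0"
      using IVT'[where f=e and a=xm and y=0 and b=xM, OF m M True continuous_on_subset[OF c]] by blast
    thus ?thesis using xm xM by auto
  next
    case False
    obtain x where "xM \<le> x" "x \<le> xm" "e x = 0"
      using IVT2'[where f=e and a=xM and y=0 and b=xm, OF m M _ continuous_on_subset[OF c]] False by force
    thus ?thesis using xm xM by auto
  qed
qed


lemma deriv_shift:
  fixes f f' :: "real \<Rightarrow> real"
  assumes der: "\<And>x. (f has_real_derivative f' x) (at x)"
  shows "((\<lambda>x. f (x + c)) has_real_derivative f' (x + c)) (at x)"
proof -
  have "((\<lambda>x. x + c) has_real_derivative 1) (at x)" by (auto intro!: derivative_eq_intros)
  from DERIV_chain2[OF der this] show ?thesis by simp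
qed

lemma wirtinger:
  fixes f f' :: "real \<Rightarrow> real"
  assumes der: "\<And>x. (f has_real_derivative f' x) (at x)" and cf': "continuous_on UNIV f'"
    and L: "L > 0" and per: "\<And>x. f (x + L) = f x" and per': "\<And>x. f' (x + L) = f' x"
    and mean: "integral {0..L} f = 0"
  shows "(2*pi/L)^2 * integral {0..L} (\<lambda>x. (f x)^2) \<le> integral {0..L} (\<lambda>x. (f' x)^2)"
proof -
  define P where "P = L/2"
  have P: "P > 0" "L = 2*P" using L unfolding P_def by auto
  have cf: "continuous_on UNIV f"
    using der by (meson DERIV_isCont continuous_at_imp_continuous_on)
  define e where "e x = (f x + f (x + P)) / 2" for x
  define od where "od x = (f x - f (x + P)) / 2" for x
  define e' where "e' x = (f' x + f' (x + P)) / 2" for x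
  define od' where "od' x = (f' x - f' (x + P)) / 2" for x
  have per2: "f (x + P + P) = f x" for x using per[of x] P by (simp add: add.assoc)
  have per2': "f' (x + P + P) = f' x" for x using per'[of x] P by (simp add: add.assoc)
  have de: "(e has_real_derivative e' x) (at x)" for x
    unfolding e_def e'_def by (intro DERIV_cdivide DERIV_add DERIV_diff der deriv_shift[OF der])
  have do: "(od has_real_derivative od' x) (at x)" for x
    unfolding od_def od'_def by (intro DERIV_cdivide DERIV_add DERIV_diff der deriv_shift[OF der])
  have ce: "continuous_on UNIV e"
    using de by (meson DERIV_isCont continuous_at_imp_continuous_on)
  have co: "continuous_on UNIV od"
    using do by (meson DERIV_isCont continuous_at_imp_continuous_on)
  have ce': "continuous_on UNIV e'" unfolding e'_def
    by (rule continuous_on_divide[OF continuous_on_add[OF cf' cont_shift[OF cf']] continuous_on_const]) simp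
  have co': "continuous_on UNIV od'" unfolding od'_def
    by (rule continuous_on_divide[OF continuous_on_diff[OF cf' cont_shift[OF cf']] continuous_on_const]) simp
  have sqc: "continuous_on UNIV (\<lambda>x. (g x)^2)" if "continuous_on UNIV g" for g :: "real \<Rightarrow> real"
    by (rule continuous_on_power[OF that])
  have eper: "e (x + P) = e x" for x unfolding e_def using per2[of x] by simp
  have oper: "od (x + P) = - od x" for x unfolding od_def using per2[of x] by (simp add: field_simps)
  have eper': "e' (x + P) = e' x" for x unfolding e'_def using per2'[of x] by simp
  have oper': "od' (x + P) = - od' x" for x unfolding od'_def using per2'[of x] by (simp add: field_simps)
  have sq: "(f x)^2 + (f (x+P))^2 = 2 * (e x)^2 + 2 * (od x)^2" for x
    unfolding e_def od_def by (simp add: power_divide power2_diff power2_sum add_divide_distrib diff_divide_distrib)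
  have sq': "(f' x)^2 + (f' (x+P))^2 = 2 * (e' x)^2 + 2 * (od' x)^2" for x
    unfolding e'_def od'_def by (simp add: power_divide power2_diff power2_sum add_divide_distrib diff_divide_distrib)
  have intf: "integral {0..L} (\<lambda>x. (f x)^2) = 2 * integral {0..P} (\<lambda>x. (e x)^2) + 2 * integral {0..P} (\<lambda>x. (od x)^2)"
  proof -
    have "integral {0..L} (\<lambda>x. (f x)^2) = integral {0..P} (\<lambda>x. 2 * (e x)^2 + 2 * (od x)^2)"
      unfolding P(2) using int_split[of "\<lambda>x. (f x)^2" P] P sq by (simp add: sqc cf)
    also have "\<dots> = 2 * integral {0..P} (\<lambda>x. (e x)^2) + 2 * integral {0..P} (\<lambda>x. (od x)^2)"
      by (simp add: integral_add cont_int sqc ce co integrable_on_cmult_left)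
    finally show ?thesis .
  qed
  have intf': "integral {0..L} (\<lambda>x. (f' x)^2) = 2 * integral {0..P} (\<lambda>x. (e' x)^2) + 2 * integral {0..P} (\<lambda>x. (od' x)^2)"
  proof -
    have "integral {0..L} (\<lambda>x. (f' x)^2) = integral {0..P} (\<lambda>x. 2 * (e' x)^2 + 2 * (od' x)^2)"
      unfolding P(2) using int_split[of "\<lambda>x. (f' x)^2" P] P sq' by (simp add: sqc cf')
    also have "\<dots> = 2 * integral {0..P} (\<lambda>x. (e' x)^2) + 2 * integral {0..P} (\<lambda>x. (od' x)^2)"
      by (simp add: integral_add cont_int sqc ce' co' integrable_on_cmult_left)
    finally show ?thesis .
  qed
  have "integral {0..P} e = integral {0..L} f / 2"
  proof -
    have "integral {0..L} f = integral {0..P} (\<lambda>x. f x + f (x + P))"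
      unfolding P(2) by (rule int_split[OF cf]) (use P in simp)
    also have "\<dots> = integral {0..P} (\<lambda>x. 2 * e x)" by (rule integral_cong) (simp add: e_def)
    also have "\<dots> = 2 * integral {0..P} e" by simp
    finally show ?thesis by simp
  qed
  hence "integral {0..P} e = 0" using mean by simp
  then obtain b where b: "b \<in> {0..P}" "e b = 0" using zero_exists[OF ce P(1)] by auto
  have E: "(pi/P)^2 * integral {0..P} (\<lambda>x. (e x)^2) \<le> integral {0..P} (\<lambda>x. (e' x)^2)"
  proof -
    have "(pi/P)^2 * integral {b..b+P} (\<lambda>x. (e x)^2) \<le> integral {b..b+P} (\<lambda>x. (e' x)^2)"
      by (rule dirichlet[OF de ce' P(1)]) (use b eper[of b] in auto)
    moreover have "integral {b..b+P} (\<lambda>x. (e x)^2) = integral {0..P} (\<lambda>x. (e x)^2)"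
      by (rule int_per_shift) (use b eper in \<open>auto intro!: sqc ce\<close>)
    moreover have "integral {b..b+P} (\<lambda>x. (e' x)^2) = integral {0..P} (\<lambda>x. (e' x)^2)"
      by (rule int_per_shift) (use b eper' in \<open>auto intro!: sqc ce'\<close>)
    ultimately show ?thesis by simp
  qed
  have "\<exists>b\<in>{0..P}. od b = 0"
  proof (cases "od 0 \<le> 0")
    case True
    hence "0 \<le> od P" using oper[of 0] by simp
    thus ?thesis using IVT'[where f=od and a=0 and y=0 and b=P, OF True _ _ continuous_on_subset[OF co]] P by auto
  next
    case False
    hence "od P \<le> 0" using oper[of 0] by simp
    thus ?thesis using IVT2'[where f=od and a=0 and y=0 and b=P, OF _ _ _ continuous_on_subset[OF co]] P False by auto
  qed
  then obtain c where c: "c \<in> {0..P}" "od c = 0" by auto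
  have O: "(pi/P)^2 * integral {0..P} (\<lambda>x. (od x)^2) \<le> integral {0..P} (\<lambda>x. (od' x)^2)"
  proof -
    have "(pi/P)^2 * integral {c..c+P} (\<lambda>x. (od x)^2) \<le> integral {c..c+P} (\<lambda>x. (od' x)^2)"
      by (rule dirichlet[OF do co' P(1)]) (use c oper[of c] in auto)
    moreover have "integral {c..c+P} (\<lambda>x. (od x)^2) = integral {0..P} (\<lambda>x. (od x)^2)"
      by (rule int_per_shift) (use c oper in \<open>auto intro!: sqc co\<close>)
    moreover have "integral {c..c+P} (\<lambda>x. (od' x)^2) = integral {0..P} (\<lambda>x. (od' x)^2)"
      by (rule int_per_shift) (use c oper' in \<open>auto intro!: sqc co'\<close>)
    ultimately show ?thesis by simp
  qed
  have "2*pi/L = pi/P" unfolding P_def by simp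
  thus ?thesis unfolding intf intf' using E O by (simp add: algebra_simps)
qed


lemma tensor_inner: "tensor (a::real^'n) (b::real^'m) \<bullet> tensor c d = (a \<bullet> c) * (b \<bullet> d)"
proof -
  have U: "(UNIV::('n\<times>'m) set) = UNIV \<times> UNIV" by simp
  have "tensor a b \<bullet> tensor c d = (\<Sum>ij\<in>UNIV. (a $ fst ij * b $ snd ij) * (c $ fst ij * d $ snd ij))"
    unfolding inner_vec_def tensor_def by simp
  also have "\<dots> = (\<Sum>ij\<in>UNIV \<times> UNIV. (a $ fst ij * b $ snd ij) * (c $ fst ij * d $ snd ij))"
    by (subst U) (rule refl)
  also have "\<dots> = (\<Sum>i\<in>UNIV. \<Sum>j\<in>UNIV. (a $ i * c $ i) * (b $ j * d $ j))"
    by (simp add: sum.cartesian_product split_def mult_ac)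
  also have "\<dots> = (a \<bullet> c) * (b \<bullet> d)"
    unfolding inner_vec_def by (simp add: sum_product)
  finally show ?thesis .
qed

lemma tensor_add_left: "tensor (a + a') b = tensor a b + tensor a' b"
  unfolding tensor_def by (simp add: vec_eq_iff algebra_simps)
lemma tensor_scale_left: "tensor (r *\<^sub>R a) b = r *\<^sub>R tensor a b"
  unfolding tensor_def by (simp add: vec_eq_iff algebra_simps)
lemma tensor_add_right: "tensor a (b + b') = tensor a b + tensor a b'"
  unfolding tensor_def by (simp add: vec_eq_iff algebra_simps)
lemma tensor_scale_right: "tensor a (r *\<^sub>R b) = r *\<^sub>R tensor a b"
  unfolding tensor_def by (simp add: vec_eq_iff algebra_simps)

lemma bl_tensor_left: "bounded_linear (\<lambda>x. tensor x b)"
  by (rule linear_conv_bounded_linear[THEN iffD1], rule linearI) (simp_all add: tensor_add_left tensor_scale_left)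
lemma bl_tensor_right: "bounded_linear (\<lambda>x. tensor a x)"
  by (rule linear_conv_bounded_linear[THEN iffD1], rule linearI) (simp_all add: tensor_add_right tensor_scale_right)

lemma pd1_tensor:
  assumes "\<And>s. (c has_vector_derivative c' s) (at s)"
  shows "pd1 (\<lambda>(s,t). tensor (c s) (d t)) = (\<lambda>(s,t). tensor (c' s) (d t))"
proof (rule ext, clarify)
  fix s t
  have "((\<lambda>u. tensor (c u) (d t)) has_vector_derivative tensor (c' s) (d t)) (at s)"
    by (rule bounded_linear.has_vector_derivative[OF bl_tensor_left assms])
  thus "pd1 (\<lambda>(s,t). tensor (c s) (d t)) (s,t) = tensor (c' s) (d t)"
    unfolding pd1_def by (simp add: vector_derivative_at)
qed

lemma pd2_tensor:
  assumes "\<And>t. (d has_vector_derivative d' t) (at t)"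
  shows "pd2 (\<lambda>(s,t). tensor (c s) (d t)) = (\<lambda>(s,t). tensor (c s) (d' t))"
proof (rule ext, clarify)
  fix s t
  have "((\<lambda>v. tensor (c s) (d v)) has_vector_derivative tensor (c s) (d' t)) (at t)"
    by (rule bounded_linear.has_vector_derivative[OF bl_tensor_right assms])
  thus "pd2 (\<lambda>(s,t). tensor (c s) (d t)) (s,t) = tensor (c s) (d' t)"
    unfolding pd2_def by (simp add: vector_derivative_at)
qed

lemma pointwise:
  fixes a0 a1 a2 :: "real^'n" and b0 b1 b2 :: "real^'m" and x :: "real \<times> real \<Rightarrow> real^('n\<times>'m)"
  assumes a: "a0 \<bullet> a0 = 1" "a0 \<bullet> a1 = 0" "a1 \<bullet> a1 = 1" "a1 \<bullet> a2 = 0" "a0 \<bullet> a2 = -1"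
    and b: "b0 \<bullet> b0 = 1" "b0 \<bullet> b1 = 0" "b1 \<bullet> b1 = 1" "b1 \<bullet> b2 = 0" "b0 \<bullet> b2 = -1"
    and x: "x p = tensor a0 b0" "pd1 x p = tensor a1 b0" "pd2 x p = tensor a0 b1"
      "x11 x p = tensor a2 b0" "x12 x p = tensor a1 b1" "x22 x p = tensor a0 b2"
  shows "((norm (mean_curv_vec x p))\<^sup>2 - gauss_curv x p + 1) * sqrt (gdet x p)
         = (a2 \<bullet> a2 + b2 \<bullet> b2 + 2) / 4"
proof -
  have a': "a1 \<bullet> a0 = 0" "a2 \<bullet> a1 = 0" "a2 \<bullet> a0 = -1" using a by (simp_all add: inner_commute)
  have b': "b1 \<bullet> b0 = 0" "b2 \<bullet> b1 = 0" "b2 \<bullet> b0 = -1" using b by (simp_all add: inner_commute)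
  note ip = tensor_inner a a' b b'
  have E: "fE x p = 1" and F: "fF x p = 0" and G: "fG x p = 1"
    unfolding fE_def fF_def fG_def x by (simp_all add: ip)
  have g: "gdet x p = 1" unfolding gdet_def E F G by simp
  have tp: "tan_part x p v = (v \<bullet> pd1 x p) *\<^sub>R pd1 x p + (v \<bullet> pd2 x p) *\<^sub>R pd2 x p" for v
    unfolding tan_part_def g E F G by simp
  have sn: "sphere_normal x p v = v - (v \<bullet> pd1 x p) *\<^sub>R pd1 x p - (v \<bullet> pd2 x p) *\<^sub>R pd2 x p - (v \<bullet> x p) *\<^sub>R x p" for v
    unfolding sphere_normal_def eucl_normal_def tp by (simp add: algebra_simps)
  have n11: "sphere_normal x p (x11 x p) = tensor a2 b0 + tensor a0 b0"
    unfolding sn x by (simp add: ip)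
  have n22: "sphere_normal x p (x22 x p) = tensor a0 b2 + tensor a0 b0"
    unfolding sn x by (simp add: ip)
  have H: "mean_curv_vec x p = (1/2) *\<^sub>R (tensor a2 b0 + tensor a0 b2 + 2 *\<^sub>R tensor a0 b0)"
    unfolding mean_curv_vec_def g E F G n11 n22 by (simp add: algebra_simps scaleR_2)
  have "(norm (mean_curv_vec x p))\<^sup>2 = (a2 \<bullet> a2 + b2 \<bullet> b2 - 2) / 4"
    unfolding H power2_norm_eq_inner
    by (simp add: inner_add_left inner_add_right ip algebra_simps)
  moreover have "gauss_curv x p = 0"
  proof -
    have en: "eucl_normal x p v = v - (v \<bullet> pd1 x p) *\<^sub>R pd1 x p - (v \<bullet> pd2 x p) *\<^sub>R pd2 x p" for v
      unfolding eucl_normal_def tp by (simp add: algebra_simps)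
    show ?thesis unfolding gauss_curv_def g en x by (simp add: ip)
  qed
  ultimately show ?thesis using g by (simp add: field_simps)
qed


lemma inner_vderiv:
  fixes c d :: "real \<Rightarrow> real^'n"
  assumes "(c has_vector_derivative c') (at s)" "(d has_vector_derivative d') (at s)"
  shows "((\<lambda>s. c s \<bullet> d s) has_real_derivative (c s \<bullet> d' + c' \<bullet> d s)) (at s)"
proof -
  have "((\<lambda>s. c s \<bullet> d s) has_derivative (\<lambda>h. c s \<bullet> (h *\<^sub>R d') + (h *\<^sub>R c') \<bullet> d s)) (at s)"
    using has_derivative_inner[OF assms[unfolded has_vector_derivative_def]] .
  thus ?thesis unfolding has_field_derivative_def
    by (rule has_derivative_eq_rhs) (auto simp: algebra_simps)
qed

lemma const_deriv_zero:
  assumes "(g has_real_derivative D) (at s)" "\<And>s. g s = k"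
  shows "D = 0"
proof -
  have "g = (\<lambda>s. k)" using assms(2) by auto
  hence "((\<lambda>s. k) has_real_derivative D) (at s)" using assms(1) by simp
  moreover have "((\<lambda>s. k) has_real_derivative 0) (at s)" by simp
  ultimately show ?thesis by (rule DERIV_unique)
qed

lemma deriv_periodic:
  fixes c :: "real \<Rightarrow> real^'n"
  assumes der: "\<And>s. (c has_vector_derivative c1 s) (at s)" and per: "\<And>s. c (s + L) = c s"
  shows "c1 (s + L) = c1 s"
proof -
  have sh: "((\<lambda>s. s + L) has_vector_derivative 1) (at s)"
    using has_real_derivative_iff_has_vector_derivative[THEN iffD1, of "\<lambda>s. s + L" 1]
    by (auto intro!: derivative_eq_intros)
  have "((c \<circ> (\<lambda>s. s + L)) has_vector_derivative (1 *\<^sub>R c1 (s + L))) (at s)"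
    by (rule vector_diff_chain_at[OF sh]) (use der in simp)
  moreover have "c \<circ> (\<lambda>s. s + L) = c" using per by (auto simp: comp_def)
  ultimately have "(c has_vector_derivative c1 (s + L)) (at s)" by simp
  thus ?thesis using der[of s] by (rule vector_derivative_unique_at)
qed

lemma curve_facts:
  fixes c :: "real \<Rightarrow> real^'n"
  assumes "closed_unit_speed_sphere_curve c L"
  shows "\<exists>c1 c2 c3. (\<forall>s. (c has_vector_derivative c1 s) (at s)) \<and> (\<forall>s. (c1 has_vector_derivative c2 s) (at s))
    \<and> (\<forall>s. (c2 has_vector_derivative c3 s) (at s))
    \<and> (\<forall>s. c s \<bullet> c s = 1 \<and> c s \<bullet> c1 s = 0 \<and> c1 s \<bullet> c1 s = 1 \<and> c1 s \<bullet> c2 s = 0 \<and> c s \<bullet> c2 s = -1)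
    \<and> (\<forall>s. c1 (s + L) = c1 s \<and> c2 (s + L) = c2 s) \<and> L > 0 \<and> (\<forall>s. c (s + L) = c s)"
proof -
  from assms obtain D where D0: "D 0 = c" and DS: "\<And>k t. (D k has_vector_derivative D (Suc k) t) (at t)"
    and L: "L > 0" and per: "\<And>s. c (s + L) = c s" and nc: "\<And>s. norm (c s) = 1"
    and nd: "\<And>s. norm (vector_derivative c (at s)) = 1"
    unfolding closed_unit_speed_sphere_curve_def smooth_curve_def by blast
  define c1 where "c1 = D 1"
  define c2 where "c2 = D 2"
  define c3 where "c3 = D 3"
  have d0: "(c has_vector_derivative c1 s) (at s)" for s using DS[of 0 s] D0 unfolding c1_def by simp
  have d1: "(c1 has_vector_derivative c2 s) (at s)" for s using DS[of 1 s] unfolding c1_def c2_def by (simp add: numeral_2_eq_2)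
  have d2: "(c2 has_vector_derivative c3 s) (at s)" for s using DS[of 2 s] unfolding c3_def c2_def by (simp add: numeral_3_eq_3 numeral_2_eq_2)
  have cc: "c s \<bullet> c s = 1" for s using nc[of s] by (simp add: dot_square_norm)
  have c1c1: "c1 s \<bullet> c1 s = 1" for s using nd[of s] vector_derivative_at[OF d0[of s]] by (simp add: dot_square_norm)
  have "c s \<bullet> c1 s + c1 s \<bullet> c s = 0" for s
    by (rule const_deriv_zero[OF inner_vderiv[OF d0 d0]]) (rule cc)
  hence cc1: "c s \<bullet> c1 s = 0" for s by (simp add: inner_commute)
  have "c1 s \<bullet> c2 s + c2 s \<bullet> c1 s = 0" for s
    by (rule const_deriv_zero[OF inner_vderiv[OF d1 d1]]) (rule c1c1)
  hence c1c2: "c1 s \<bullet> c2 s = 0" for s by (simp add: inner_commute)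
  have "c s \<bullet> c2 s + c1 s \<bullet> c1 s = 0" for s
    by (rule const_deriv_zero[OF inner_vderiv[OF d0 d1]]) (rule cc1)
  hence cc2: "c s \<bullet> c2 s = -1" for s using c1c1 by (simp add: eq_neg_iff_add_eq_0)
  have p1: "c1 (s + L) = c1 s" for s by (rule deriv_periodic[OF d0 per])
  have p2: "c2 (s + L) = c2 s" for s by (rule deriv_periodic[OF d1 p1])
  show ?thesis using d0 d1 d2 cc cc1 c1c1 c1c2 cc2 p1 p2 L per by blast
qed

lemma comp_deriv:
  fixes c :: "real \<Rightarrow> real^'n"
  assumes "\<And>s. (c has_vector_derivative c1 s) (at s)"
  shows "((\<lambda>s. c s $ i) has_real_derivative c1 s $ i) (at s)"
  unfolding has_real_derivative_iff_has_vector_derivative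
  by (rule bounded_linear.has_vector_derivative[OF bounded_linear_vec_nth assms])

lemma comp_cont:
  fixes c :: "real \<Rightarrow> real^'n"
  assumes "\<And>s. (c has_vector_derivative c1 s) (at s)"
  shows "continuous_on UNIV (\<lambda>s. c s $ i)"
  using comp_deriv[OF assms] by (meson DERIV_isCont continuous_at_imp_continuous_on)

lemma sum_int_sq:
  fixes c :: "real \<Rightarrow> real^'n"
  assumes "\<And>s. (c has_vector_derivative c1 s) (at s)"
  shows "integral {a..b} (\<lambda>s. c s \<bullet> c s) = (\<Sum>i\<in>UNIV. integral {a..b} (\<lambda>s. (c s $ i)^2))"
proof -
  have "integral {a..b} (\<lambda>s. c s \<bullet> c s) = integral {a..b} (\<lambda>s. \<Sum>i\<in>UNIV. (c s $ i)^2)"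
    by (simp add: inner_vec_def power2_eq_square)
  also have "\<dots> = (\<Sum>i\<in>UNIV. integral {a..b} (\<lambda>s. (c s $ i)^2))"
    by (rule integral_sum) (auto intro!: cont_int continuous_on_power comp_cont[OF assms])
  finally show ?thesis .
qed

lemma curve_bound:
  fixes c c1 c2 c3 :: "real \<Rightarrow> real^'n"
  assumes d0: "\<And>s. (c has_vector_derivative c1 s) (at s)"
    and d1: "\<And>s. (c1 has_vector_derivative c2 s) (at s)"
    and d2: "\<And>s. (c2 has_vector_derivative c3 s) (at s)"
    and c1c1: "\<And>s. c1 s \<bullet> c1 s = 1" and per: "\<And>s. c (s + L) = c s"
    and p1: "\<And>s. c1 (s + L) = c1 s" and p2: "\<And>s. c2 (s + L) = c2 s" and L: "L > 0"
  shows "4*pi^2/L \<le> integral {0..L} (\<lambda>s. c2 s \<bullet> c2 s)"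
proof -
  have W: "(2*pi/L)^2 * integral {0..L} (\<lambda>s. (c1 s $ i)^2) \<le> integral {0..L} (\<lambda>s. (c2 s $ i)^2)" for i
  proof (rule wirtinger[OF comp_deriv[OF d1] comp_cont[OF d2] L])
    show "c1 (x + L) $ i = c1 x $ i" for x using p1 by simp
    show "c2 (x + L) $ i = c2 x $ i" for x using p2 by simp
    have "((\<lambda>s. c1 s $ i) has_integral (c L $ i - c 0 $ i)) {0..L}"
      apply (rule fundamental_theorem_of_calculus)
      using L apply simp
      using comp_deriv[OF d0, of i] by (simp add: has_real_derivative_iff_has_vector_derivative[symmetric] has_field_derivative_at_within)
    moreover have "c L = c 0" using per[of 0] by simp
    ultimately show "integral {0..L} (\<lambda>s. c1 s $ i) = 0" by (simp add: integral_unique)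
  qed
  have "integral {0..L} (\<lambda>s. c1 s \<bullet> c1 s) = L" using c1c1 L by simp
  hence S1: "(\<Sum>i\<in>UNIV. integral {0..L} (\<lambda>s. (c1 s $ i)^2)) = L" using sum_int_sq[OF d1] by simp
  have "(2*pi/L)^2 * L = (\<Sum>i\<in>UNIV. (2*pi/L)^2 * integral {0..L} (\<lambda>s. (c1 s $ i)^2))"
    unfolding sum_distrib_left[symmetric] S1 ..
  also have "\<dots> \<le> (\<Sum>i\<in>UNIV. integral {0..L} (\<lambda>s. (c2 s $ i)^2))" by (rule sum_mono) (rule W)
  also have "\<dots> = integral {0..L} (\<lambda>s. c2 s \<bullet> c2 s)" using sum_int_sq[OF d2] by simp
  finally show ?thesis using L by (simp add: power2_eq_square field_simps)
qed


theorem proposition3p7: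
  fixes \<gamma> :: "real \<Rightarrow> real^'n" and \<gamma>h :: "real \<Rightarrow> real^'m" and L Lh :: real
  assumes "closed_unit_speed_sphere_curve \<gamma> L"
    and "closed_unit_speed_sphere_curve \<gamma>h Lh"
  shows "willmore (tensor_torus \<gamma> \<gamma>h) L Lh > 2 * pi\<^sup>2"
proof -
  obtain a1 a2 a3 where
    ad0: "\<And>s. (\<gamma> has_vector_derivative a1 s) (at s)" and ad1: "\<And>s. (a1 has_vector_derivative a2 s) (at s)"
    and ad2: "\<And>s. (a2 has_vector_derivative a3 s) (at s)"
    and ai: "\<And>s. \<gamma> s \<bullet> \<gamma> s = 1 \<and> \<gamma> s \<bullet> a1 s = 0 \<and> a1 s \<bullet> a1 s = 1 \<and> a1 s \<bullet> a2 s = 0 \<and> \<gamma> s \<bullet> a2 s = -1"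
    and ap: "\<And>s. a1 (s + L) = a1 s \<and> a2 (s + L) = a2 s" and L: "L > 0" and aper: "\<And>s. \<gamma> (s + L) = \<gamma> s"
    using curve_facts[OF assms(1)] by blast
  obtain b1 b2 b3 where
    bd0: "\<And>s. (\<gamma>h has_vector_derivative b1 s) (at s)" and bd1: "\<And>s. (b1 has_vector_derivative b2 s) (at s)"
    and bd2: "\<And>s. (b2 has_vector_derivative b3 s) (at s)"
    and bi: "\<And>s. \<gamma>h s \<bullet> \<gamma>h s = 1 \<and> \<gamma>h s \<bullet> b1 s = 0 \<and> b1 s \<bullet> b1 s = 1 \<and> b1 s \<bullet> b2 s = 0 \<and> \<gamma>h s \<bullet> b2 s = -1"
    and bp: "\<And>s. b1 (s + Lh) = b1 s \<and> b2 (s + Lh) = b2 s" and Lh: "Lh > 0" and bper: "\<And>s. \<gamma>h (s + Lh) = \<gamma>h s"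
    using curve_facts[OF assms(2)] by blast
  define y where "y = tensor_torus \<gamma> \<gamma>h"
  have y: "y = (\<lambda>(s,t). tensor (\<gamma> s) (\<gamma>h t))" unfolding y_def tensor_torus_def ..
  have y1: "pd1 y = (\<lambda>(s,t). tensor (a1 s) (\<gamma>h t))" unfolding y by (rule pd1_tensor[OF ad0])
  have y2: "pd2 y = (\<lambda>(s,t). tensor (\<gamma> s) (b1 t))" unfolding y by (rule pd2_tensor[OF bd0])
  have y11: "x11 y = (\<lambda>(s,t). tensor (a2 s) (\<gamma>h t))" unfolding x11_def y1 by (rule pd1_tensor[OF ad1])
  have y12: "x12 y = (\<lambda>(s,t). tensor (a1 s) (b1 t))" unfolding x12_def y1 by (rule pd2_tensor[OF bd0])
  have y22: "x22 y = (\<lambda>(s,t). tensor (\<gamma> s) (b2 t))" unfolding x22_def y2 by (rule pd2_tensor[OF bd1])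
  define A where "A s = a2 s \<bullet> a2 s" for s
  define B where "B t = b2 t \<bullet> b2 t" for t
  have pw: "((norm (mean_curv_vec y p))\<^sup>2 - gauss_curv y p + 1) * sqrt (gdet y p) = (A (fst p) + B (snd p) + 2) / 4" for p
  proof (cases p)
    case (Pair s t)
    have yp: "y (s,t) = tensor (\<gamma> s) (\<gamma>h t)" unfolding y by simp
    show ?thesis unfolding Pair A_def B_def fst_conv snd_conv
      by (rule pointwise[of "\<gamma> s" "a1 s" "a2 s" "\<gamma>h t" "b1 t" "b2 t"])
        (use ai[of s] bi[of t] yp in \<open>simp_all add: y1 y2 y11 y12 y22\<close>)
  qed
  have ca2: "continuous_on UNIV a2"
    by (intro continuous_at_imp_continuous_on ballI has_vector_derivative_continuous[OF ad2])
  have cb2: "continuous_on UNIV b2"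
    by (intro continuous_at_imp_continuous_on ballI has_vector_derivative_continuous[OF bd2])
  have cA: "continuous_on UNIV A" unfolding A_def by (intro continuous_intros ca2)
  have cB: "continuous_on UNIV B" unfolding B_def by (intro continuous_intros cb2)
  define IA where "IA = integral {0..L} A"
  define IB where "IB = integral {0..Lh} B"
  have hB: "(B has_integral IB) {0..Lh}" unfolding IB_def by (rule integrable_integral, rule cont_int[OF cB])
  have hA: "(A has_integral IA) {0..L}" unfolding IA_def by (rule integrable_integral, rule cont_int[OF cA])
  have inner: "integral {0..Lh} (\<lambda>t. (A s + B t + 2) / 4) = (Lh * (A s + 2) + IB) / 4" for s
  proof -
    have "((\<lambda>t. (A s + 2) + B t) has_integral (Lh * (A s + 2) + IB)) {0..Lh}"
      using has_integral_add[OF has_integral_const_real[of "A s + 2" 0 Lh] hB] Lh by simp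
    hence "((\<lambda>t. ((A s + 2) + B t) / 4) has_integral (Lh * (A s + 2) + IB) / 4) {0..Lh}"
      by (rule has_integral_divide)
    moreover have "(\<lambda>t. ((A s + 2) + B t) / 4) = (\<lambda>t. (A s + B t + 2) / 4)" by (simp add: algebra_simps)
    ultimately show ?thesis by (metis integral_unique)
  qed
  have outer: "integral {0..L} (\<lambda>s. (Lh * (A s + 2) + IB) / 4) = (Lh * IA + 2 * Lh * L + L * IB) / 4"
  proof -
    have "((\<lambda>s. Lh * A s + (2 * Lh + IB)) has_integral (Lh * IA + L * (2 * Lh + IB))) {0..L}"
      using has_integral_add[OF has_integral_mult_right[OF hA, of Lh] has_integral_const_real[of "2 * Lh + IB" 0 L]] L by simp
    hence "((\<lambda>s. (Lh * A s + (2 * Lh + IB)) / 4) has_integral (Lh * IA + L * (2 * Lh + IB)) / 4) {0..L}"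
      by (rule has_integral_divide)
    moreover have "(\<lambda>s. (Lh * A s + (2 * Lh + IB)) / 4) = (\<lambda>s. (Lh * (A s + 2) + IB) / 4)" by (simp add: algebra_simps)
    moreover have "(Lh * IA + L * (2 * Lh + IB)) / 4 = (Lh * IA + 2 * Lh * L + L * IB) / 4" by (simp add: algebra_simps)
    ultimately show ?thesis by (metis integral_unique)
  qed
  have W: "willmore y L Lh = (Lh * IA + 2 * Lh * L + L * IB) / 4"
  proof -
    have "willmore y L Lh = integral (cbox (0,0) (L,Lh)) (\<lambda>p. (A (fst p) + B (snd p) + 2) / 4)"
      unfolding willmore_def pw ..
    also have "\<dots> = integral (cbox 0 L) (\<lambda>s. integral (cbox 0 Lh) (\<lambda>t. (A s + B t + 2) / 4))"
    proof (rule trans[OF integral_prod_continuous])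
      show "continuous_on (cbox (0, 0) (L, Lh)) (\<lambda>p. (A (fst p) + B (snd p) + 2) / 4)"
        by (intro continuous_intros continuous_on_compose2[OF cA] continuous_on_compose2[OF cB]) auto
    qed simp
    also have "\<dots> = (Lh * IA + 2 * Lh * L + L * IB) / 4"
      using inner outer by simp
    finally show ?thesis .
  qed
  have bA: "4*pi^2/L \<le> IA" unfolding IA_def A_def
    by (rule curve_bound[OF ad0 ad1 ad2]) (use ai ap aper L in auto)
  have bB: "4*pi^2/Lh \<le> IB" unfolding IB_def B_def
    by (rule curve_bound[OF bd0 bd1 bd2]) (use bi bp bper Lh in auto)
  define X where "X = (Lh^2 + L^2) / (L * Lh)"
  have "Lh * (4*pi^2/L) + L * (4*pi^2/Lh) \<le> Lh * IA + L * IB"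
    using bA bB L Lh by (intro add_mono mult_left_mono) auto
  moreover have "Lh * (4*pi^2/L) + L * (4*pi^2/Lh) = 4*pi^2 * X"
    unfolding X_def using L Lh by (simp add: field_simps power2_eq_square)
  moreover have "X \<ge> 2"
  proof -
    have "0 \<le> (L - Lh)^2" by simp
    hence "2 * (L * Lh) \<le> Lh^2 + L^2" by (simp add: power2_diff)
    thus ?thesis unfolding X_def using L Lh by (simp add: le_divide_eq)
  qed
  hence "4*pi^2 * 2 \<le> 4*pi^2 * X" by (intro mult_left_mono) auto
  ultimately have "8 * pi^2 \<le> Lh * IA + L * IB" by linarith
  moreover have "0 < 2 * Lh * L" using L Lh by simp
  ultimately have "8 * pi^2 < Lh * IA + 2 * Lh * L + L * IB" by linarith
  hence "2 * pi^2 < willmore y L Lh" unfolding W by simp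
  thus ?thesis unfolding y_def .
qed

end
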